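(* Let $Q$ be a quiver without oriented cycles and $\mathbf D=k\tilde Q/\mathcal I$. If $M$ is a $\Delta$-filtered $\mathbf D$-module and $i$ is a sink of $Q$, then $\mathrm{Ext}^1_{\mathbf D}(M,\Delta(i))=0$.
   Context: $k$ is an algebraically closed field. $\tilde Q$ is the double of $Q$ (arrows $\alpha\in Q_1$ and reversed arrows $\alpha^*:t(\alpha)\to s(\alpha)$), paths composed right to left; $\mathcal I$ is the ideal of $k\tilde Q$ generated by $\alpha^*\alpha-\sum_{\gamma\in Q_1,t(\gamma)=s(\alpha)}\gamma\gamma^*$ ($\alpha\in Q_1$) and $\beta^*\alpha$ ($\alpha\ne\beta\in Q_1$ with $t(\alpha)=t(\beta)$). $\Delta(i)$ is the indecomposable projective $kQ$-module with simple top $L(i)$, regarded as a $\mathbf D$-module via the surjection $\mathbf D\to kQ$ killing all $\alpha^*$. A $\mathbf D$-module is $\Delta$-filtered if it has a chain of submodules whose successive quotients are isomorphic to modules $\Delta(j)$. A vertex is a sink if no arrow of $Q$ starts there, a source if no arrow of $Q$ ends there. *)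

theory Defs
  imports "Jordan_Normal_Form.Matrix" "HOL-Computational_Algebra.Polynomial"
begin

definition alg_closed :: "'k::field itself \<Rightarrow> bool" where
  "alg_closed _ \<longleftrightarrow> (\<forall>p::'k poly. degree p > 0 \<longrightarrow> (\<exists>x. poly p x = 0))"

text \<open>A (finite-dimensional) D-module is a representation of the double quiver:
  vector space k^(dimv v) at vertex v, matrix amap a : s a -> t a for each arrow a,
  matrix smap a : t a -> s a for the reversed arrow a*, satisfying the relations of I.
  Paths are composed right to left.\<close>
record ('v, 'e, 'k) drep =
  dimv :: "'v \<Rightarrow> nat"
  amap :: "'e \<Rightarrow> 'k mat"
  smap :: "'e \<Rightarrow> 'k mat"

definition is_Drep :: "('e::finite \<Rightarrow> 'v) \<Rightarrow> ('e \<Rightarrow> 'v) \<Rightarrow> ('v, 'e, 'k::field) drep \<Rightarrow> bool" where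
  "is_Drep s t M \<longleftrightarrow>
    (\<forall>a. amap M a \<in> carrier_mat (dimv M (t a)) (dimv M (s a))
       \<and> smap M a \<in> carrier_mat (dimv M (s a)) (dimv M (t a))) \<and>
    (\<forall>a. \<forall>i < dimv M (s a). \<forall>j < dimv M (s a).
        (smap M a * amap M a) $$ (i, j)
          = (\<Sum>c \<in> {c. t c = s a}. (amap M c * smap M c) $$ (i, j))) \<and>
    (\<forall>a b. a \<noteq> b \<and> t a = t b \<longrightarrow>
        smap M b * amap M a = 0\<^sub>m (dimv M (s b)) (dimv M (s a)))"

definition is_hom :: "('e \<Rightarrow> 'v) \<Rightarrow> ('e \<Rightarrow> 'v) \<Rightarrow> ('v, 'e, 'k::field) drep \<Rightarrow> ('v, 'e, 'k) drep
    \<Rightarrow> ('v \<Rightarrow> 'k mat) \<Rightarrow> bool" where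
  "is_hom s t M N f \<longleftrightarrow>
    (\<forall>v. f v \<in> carrier_mat (dimv N v) (dimv M v)) \<and>
    (\<forall>a. amap N a * f (s a) = f (t a) * amap M a \<and> smap N a * f (t a) = f (s a) * smap M a)"

definition is_ses :: "('e \<Rightarrow> 'v) \<Rightarrow> ('e \<Rightarrow> 'v) \<Rightarrow> ('v, 'e, 'k::field) drep \<Rightarrow> ('v, 'e, 'k) drep
    \<Rightarrow> ('v, 'e, 'k) drep \<Rightarrow> ('v \<Rightarrow> 'k mat) \<Rightarrow> ('v \<Rightarrow> 'k mat) \<Rightarrow> bool" where
  "is_ses s t L E M f g \<longleftrightarrow> is_hom s t L E f \<and> is_hom s t E M g \<and>
    (\<forall>v. (\<forall>x \<in> carrier_vec (dimv L v). f v *\<^sub>v x = 0\<^sub>v (dimv E v) \<longrightarrow> x = 0\<^sub>v (dimv L v)) \<and>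
         (\<forall>z \<in> carrier_vec (dimv M v). \<exists>y \<in> carrier_vec (dimv E v). g v *\<^sub>v y = z) \<and>
         (\<forall>y \<in> carrier_vec (dimv E v). g v *\<^sub>v y = 0\<^sub>v (dimv M v)
              \<longleftrightarrow> (\<exists>x \<in> carrier_vec (dimv L v). y = f v *\<^sub>v x)))"

text \<open>Ext^1_D(M,N) = 0 (Yoneda description): every extension 0 -> N -> E -> M -> 0
  of D-modules splits.\<close>
definition Ext1_vanishes :: "('e::finite \<Rightarrow> 'v) \<Rightarrow> ('e \<Rightarrow> 'v) \<Rightarrow> ('v, 'e, 'k::field) drep
    \<Rightarrow> ('v, 'e, 'k) drep \<Rightarrow> bool" where
  "Ext1_vanishes s t M N \<longleftrightarrow>
    (\<forall>E f g. is_Drep s t E \<longrightarrow> is_ses s t N E M f g \<longrightarrow>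
       (\<exists>h. is_hom s t M E h \<and> (\<forall>v. g v * h v = 1\<^sub>m (dimv M v))))"

text \<open>Paths from i to j, as lists of arrows, composed right to left (alpha p = alpha # p).\<close>
inductive qpath :: "('e \<Rightarrow> 'v) \<Rightarrow> ('e \<Rightarrow> 'v) \<Rightarrow> 'v \<Rightarrow> 'v \<Rightarrow> 'e list \<Rightarrow> bool"
  for s t where
  nil: "qpath s t i i []"
| cons: "qpath s t i (s a) p \<Longrightarrow> qpath s t i (t a) (a # p)"

definition path_basis :: "('e \<Rightarrow> 'v) \<Rightarrow> ('e \<Rightarrow> 'v) \<Rightarrow> 'v \<Rightarrow> 'v \<Rightarrow> 'e list list" where
  "path_basis s t i j = (SOME xs. distinct xs \<and> set xs = {p. qpath s t i j p})"

text \<open>Delta(i) = kQ e_i, the indecomposable projective kQ-module with top L(i):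
  at vertex j it has basis the paths from i to j, arrows act by left composition,
  reversed arrows act by zero.\<close>
definition Delta :: "('e \<Rightarrow> 'v) \<Rightarrow> ('e \<Rightarrow> 'v) \<Rightarrow> 'v \<Rightarrow> ('v, 'e, 'k::field) drep" where
  "Delta s t i = \<lparr> dimv = (\<lambda>j. length (path_basis s t i j)),
     amap = (\<lambda>a. mat (length (path_basis s t i (t a))) (length (path_basis s t i (s a)))
               (\<lambda>(r, c). if path_basis s t i (t a) ! r = a # (path_basis s t i (s a) ! c)
                         then 1 else 0)),
     smap = (\<lambda>a. 0\<^sub>m (length (path_basis s t i (s a))) (length (path_basis s t i (t a)))) \<rparr>"

text \<open>Delta-filtered: a chain 0 = M_0 <= ... <= M_n = M with M_k/M_(k-1) = Delta(j_k),
  expressed recursively through the top step 0 -> M_(n-1) -> M -> Delta(j_n) -> 0.\<close>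
inductive Delta_filtered :: "('e::finite \<Rightarrow> 'v) \<Rightarrow> ('e \<Rightarrow> 'v) \<Rightarrow> ('v, 'e, 'k::field) drep \<Rightarrow> bool"
  for s t where
  zero: "is_Drep s t M \<Longrightarrow> (\<forall>v. dimv M v = 0) \<Longrightarrow> Delta_filtered s t M"
| step: "Delta_filtered s t M' \<Longrightarrow> is_Drep s t M \<Longrightarrow> is_ses s t M' M (Delta s t j) f g
          \<Longrightarrow> Delta_filtered s t M"

end

theory Submission
  imports Defs
begin



lemma span_sum_scalar:
  fixes v :: "'j \<Rightarrow> 'k::field vec"
  assumes "\<forall>j\<in>J. v j \<in> carrier_vec n" "y \<in> carrier_vec n"
    and "\<forall>r<n. b $ r = (\<Sum>j\<in>J. c j * v j $ r)" "b \<in> carrier_vec n"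
  shows "y \<bullet> b = (\<Sum>j\<in>J. c j * (y \<bullet> v j))"
proof -
  have "y \<bullet> b = (\<Sum>i\<in>{0..<n}. y $ i * (\<Sum>j\<in>J. c j * v j $ i))"
    unfolding scalar_prod_def using assms by auto
  also have "\<dots> = (\<Sum>i\<in>{0..<n}. \<Sum>j\<in>J. c j * (y $ i * v j $ i))"
    by (simp add: sum_distrib_left ac_simps)
  also have "\<dots> = (\<Sum>j\<in>J. \<Sum>i\<in>{0..<n}. c j * (y $ i * v j $ i))"
    by (rule sum.swap)
  also have "\<dots> = (\<Sum>j\<in>J. c j * (y \<bullet> v j))"
    unfolding scalar_prod_def sum_distrib_left using assms(1) by (intro sum.cong) auto
  finally show ?thesis .
qed

lemma fredholm:
  fixes v :: "'j \<Rightarrow> 'k::field vec"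
  assumes "finite J"
  shows "\<forall>j\<in>J. v j \<in> carrier_vec n \<Longrightarrow> b \<in> carrier_vec n \<Longrightarrow>
    (\<exists>c. \<forall>r<n. b $ r = (\<Sum>j\<in>J. c j * v j $ r)) \<or>
    (\<exists>y\<in>carrier_vec n. y \<bullet> b = 1 \<and> (\<forall>j\<in>J. y \<bullet> v j = 0))"
  using assms
proof (induction J arbitrary: b rule: finite_induct)
  case empty
  show ?case
  proof (cases "\<forall>r<n. b $ r = 0")
    case True then show ?thesis by auto
  next
    case False
    then obtain k where k: "k < n" "b $ k \<noteq> 0" by auto
    define y where "y = inverse (b $ k) \<cdot>\<^sub>v unit_vec n k"
    have "y \<bullet> b = inverse (b $ k) * (unit_vec n k \<bullet> b)"
      unfolding y_def using empty by (intro smult_scalar_prod_distrib) auto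
    also have "unit_vec n k \<bullet> b = b $ k" using k empty by (intro scalar_prod_left_unit) auto
    finally have "y \<bullet> b = 1" using k by simp
    moreover have "y \<in> carrier_vec n" unfolding y_def by simp
    ultimately show ?thesis by auto
  qed
next
  case (insert j0 J)
  have vJ: "\<forall>j\<in>J. v j \<in> carrier_vec n" and v0: "v j0 \<in> carrier_vec n" using insert.prems by auto
  note b = insert.prems(2)
  from insert.IH[OF vJ v0] show ?case
  proof
    assume "\<exists>c. \<forall>r<n. v j0 $ r = (\<Sum>j\<in>J. c j * v j $ r)"
    then obtain c' where c': "\<forall>r<n. v j0 $ r = (\<Sum>j\<in>J. c' j * v j $ r)" by blast
    from insert.IH[OF vJ b] show ?thesis
    proof
      assume "\<exists>c. \<forall>r<n. b $ r = (\<Sum>j\<in>J. c j * v j $ r)"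
      then obtain c where c: "\<forall>r<n. b $ r = (\<Sum>j\<in>J. c j * v j $ r)" by blast
      have "\<forall>r<n. b $ r = (\<Sum>j\<in>insert j0 J. (c(j0 := 0)) j * v j $ r)"
      proof (intro allI impI)
        fix r assume r: "r < n"
        have "(\<Sum>j\<in>insert j0 J. (c(j0 := 0)) j * v j $ r) = (\<Sum>j\<in>J. (c(j0 := 0)) j * v j $ r)"
          using insert.hyps by (simp add: sum.insert)
        also have "\<dots> = (\<Sum>j\<in>J. c j * v j $ r)" using insert.hyps by (intro sum.cong) auto
        finally show "b $ r = (\<Sum>j\<in>insert j0 J. (c(j0 := 0)) j * v j $ r)" using c r by simp
      qed
      then show ?thesis by blast
    next
      assume "\<exists>y\<in>carrier_vec n. y \<bullet> b = 1 \<and> (\<forall>j\<in>J. y \<bullet> v j = 0)"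
      then obtain y where y: "y \<in> carrier_vec n" "y \<bullet> b = 1" "\<forall>j\<in>J. y \<bullet> v j = 0" by blast
      have "y \<bullet> v j0 = (\<Sum>j\<in>J. c' j * (y \<bullet> v j))"
        by (rule span_sum_scalar[OF vJ y(1) c' v0])
      also have "\<dots> = 0" using y(3) by simp
      finally show ?thesis using y by auto
    qed
  next
    assume "\<exists>y\<in>carrier_vec n. y \<bullet> v j0 = 1 \<and> (\<forall>j\<in>J. y \<bullet> v j = 0)"
    then obtain y1 where y1: "y1 \<in> carrier_vec n" "y1 \<bullet> v j0 = 1" "\<forall>j\<in>J. y1 \<bullet> v j = 0" by blast
    define b2 where "b2 = b - (y1 \<bullet> b) \<cdot>\<^sub>v v j0"
    have b2: "b2 \<in> carrier_vec n" unfolding b2_def using b v0 by auto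
    from insert.IH[OF vJ b2] show ?thesis
    proof
      assume "\<exists>c. \<forall>r<n. b2 $ r = (\<Sum>j\<in>J. c j * v j $ r)"
      then obtain c where c: "\<forall>r<n. b2 $ r = (\<Sum>j\<in>J. c j * v j $ r)" by blast
      have "\<forall>r<n. b $ r = (\<Sum>j\<in>insert j0 J. (c(j0 := y1 \<bullet> b)) j * v j $ r)"
      proof (intro allI impI)
        fix r assume r: "r < n"
        have "(\<Sum>j\<in>insert j0 J. (c(j0 := y1 \<bullet> b)) j * v j $ r) =
            (y1 \<bullet> b) * v j0 $ r + (\<Sum>j\<in>J. (c(j0 := y1 \<bullet> b)) j * v j $ r)"
          using insert.hyps by (simp add: sum.insert)
        also have "(\<Sum>j\<in>J. (c(j0 := y1 \<bullet> b)) j * v j $ r) = (\<Sum>j\<in>J. c j * v j $ r)"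
          using insert.hyps by (intro sum.cong) auto
        also have "\<dots> = b2 $ r" using c r by simp
        also have "b2 $ r = b $ r - (y1 \<bullet> b) * v j0 $ r" unfolding b2_def using r b v0 by auto
        finally show "b $ r = (\<Sum>j\<in>insert j0 J. (c(j0 := y1 \<bullet> b)) j * v j $ r)" by simp
      qed
      then show ?thesis by blast
    next
      assume "\<exists>y\<in>carrier_vec n. y \<bullet> b2 = 1 \<and> (\<forall>j\<in>J. y \<bullet> v j = 0)"
      then obtain y2 where y2: "y2 \<in> carrier_vec n" "y2 \<bullet> b2 = 1" "\<forall>j\<in>J. y2 \<bullet> v j = 0" by blast
      define z where "z = y2 - (y2 \<bullet> v j0) \<cdot>\<^sub>v y1"
      have z: "z \<in> carrier_vec n" unfolding z_def using y1 y2 by auto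
      have yb2: "y2 \<bullet> b2 = y2 \<bullet> b - (y1 \<bullet> b) * (y2 \<bullet> v j0)"
        unfolding b2_def using y2 b v0 by (simp add: scalar_prod_minus_distrib[of _ n])
      have zb: "z \<bullet> b = y2 \<bullet> b - (y2 \<bullet> v j0) * (y1 \<bullet> b)"
        unfolding z_def using y1 y2 b by (simp add: minus_scalar_prod_distrib[of _ n])
      have "z \<bullet> b = 1" using zb yb2 y2(2) by (simp add: ac_simps)
      moreover have "z \<bullet> v j0 = 0"
        unfolding z_def using y1 y2 v0 by (simp add: minus_scalar_prod_distrib[of _ n])
      moreover have "\<forall>j\<in>J. z \<bullet> v j = 0"
        unfolding z_def using y1 y2 vJ by (simp add: minus_scalar_prod_distrib[of _ n])
      ultimately show ?thesis using z by auto
    qed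
  qed
qed




lemma path_basis_props:
  assumes "finite {p. qpath s t i j p}"
  shows "distinct (path_basis s t i j) \<and> set (path_basis s t i j) = {p. qpath s t i j p}"
proof -
  from finite_distinct_list[OF assms] obtain xs where xs: "set xs = {p. qpath s t i j p} \<and> distinct xs" ..
  then have "distinct xs \<and> set xs = {p. qpath s t i j p}" by (simp only: conj_commute)
  then show ?thesis unfolding path_basis_def by (rule someI)
qed

lemma sink_paths:
  assumes "\<forall>a. s a \<noteq> i"
  shows "qpath s t i v p \<Longrightarrow> p = [] \<and> v = i"
proof (induction p arbitrary: v)
  case Nil then show ?case by cases auto
next
  case (Cons a p)
  from Cons.prems have "qpath s t i (s a) p" by cases auto
  then show ?case using Cons.IH assms by blast
qed

lemma sink_path_set:
  assumes "\<forall>a. s a \<noteq> i"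
  shows "{p. qpath s t i v p} = (if v = i then {[]} else {})"
  using sink_paths[OF assms] qpath.nil[of s t i] by auto

lemma dim_Delta_sink:
  assumes "\<forall>a. s a \<noteq> i"
  shows "dimv (Delta s t i :: ('v,'e,'k::field) drep) v = (if v = i then 1 else 0)"
proof -
  have fin: "finite {p. qpath s t i v p}" using sink_path_set[OF assms, of t v] by simp
  from path_basis_props[OF fin] have d: "distinct (path_basis s t i v)"
     and st: "set (path_basis s t i v) = (if v = i then {[]} else {})"
    using sink_path_set[OF assms, of t v] by auto
  have "length (path_basis s t i v) = card (set (path_basis s t i v))"
    using d by (simp add: distinct_card)
  also have "\<dots> = (if v = i then 1 else 0)" unfolding st by simp
  finally have l: "length (path_basis s t i v) = (if v = i then 1 else 0)" .
  have "dimv (Delta s t i :: ('v,'e,'k::field) drep) v = length (path_basis s t i v)"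
    unfolding Delta_def drep.select_convs by (rule refl)
  from this l show ?thesis by (rule trans)
qed

fun pverts :: "('e \<Rightarrow> 'v) \<Rightarrow> 'v \<Rightarrow> 'e list \<Rightarrow> 'v list" where
  "pverts t j [] = [j]"
| "pverts t j (a # p) = t a # pverts t j p"

lemma length_pverts: "length (pverts t j p) = Suc (length p)"
  by (induction p) auto

lemma qpath_pverts:
  assumes ac: "acyclic {(s a, t a) | a. True}"
  shows "qpath s t j v p \<Longrightarrow> distinct (pverts t j p) \<and>
    (\<forall>u\<in>set (pverts t j p). (u, v) \<in> {(s a, t a) | a. True}\<^sup>*)"
proof (induction rule: qpath.induct)
  case (nil i)
  then show ?case by simp
next
  case (cons i a p)
  let ?R = "{(s a, t a) | a. True}"
  have st: "(s a, t a) \<in> ?R" by blast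
  have reach: "\<forall>u\<in>set (pverts t i p). (u, t a) \<in> ?R\<^sup>*"
    using cons.IH st by (meson rtrancl.rtrancl_into_rtrancl)
  have "t a \<notin> set (pverts t i p)"
  proof
    assume "t a \<in> set (pverts t i p)"
    then have "(t a, s a) \<in> ?R\<^sup>*" using cons.IH by blast
    then have "(t a, t a) \<in> ?R\<^sup>+" using st by (meson rtrancl_into_trancl1)
    then show False using ac unfolding acyclic_def by blast
  qed
  then show ?case using cons.IH reach by auto
qed

lemma finite_paths:
  fixes s t :: "'e::finite \<Rightarrow> 'v::finite"
  assumes ac: "acyclic {(s a, t a) | a. True}"
  shows "finite {p. qpath s t j v p}"
proof -
  have "{p. qpath s t j v p} \<subseteq> {p. set p \<subseteq> UNIV \<and> length p \<le> card (UNIV :: 'v set)}"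
  proof (intro subsetI CollectI conjI subset_UNIV UNIV_I)
    fix p assume "p \<in> {p. qpath s t j v p}"
    then have "qpath s t j v p" by simp
    then have "distinct (pverts t j p)" using qpath_pverts[OF ac] by blast
    then have "length (pverts t j p) \<le> card (UNIV :: 'v set)"
      by (metis card_mono distinct_card finite subset_UNIV)
    then show "length p \<le> card (UNIV :: 'v set)" using length_pverts[of t j p] by simp
  qed
  moreover have "finite {p. set p \<subseteq> (UNIV::'e set) \<and> length p \<le> card (UNIV :: 'v set)}"
    by (rule finite_lists_length_le) simp
  ultimately show ?thesis by (rule finite_subset)
qed




lemma mult_zero_vec': "A \<in> carrier_mat nr nc \<Longrightarrow> A *\<^sub>v 0\<^sub>v nc = 0\<^sub>v nr"
  by (intro eq_vecI) auto

lemma lin_sum: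
  assumes G: "G \<in> carrier_mat m n" and w: "\<forall>a\<in>A. w a \<in> carrier_vec n" and r: "r < m"
  shows "(\<Sum>a\<in>A. (G *\<^sub>v w a) $ r) = (G *\<^sub>v vec n (\<lambda>k. \<Sum>a\<in>A. w a $ k)) $ r"
proof -
  have "(\<Sum>a\<in>A. (G *\<^sub>v w a) $ r) = (\<Sum>a\<in>A. \<Sum>k\<in>{0..<n}. G $$ (r, k) * w a $ k)"
    using G w r by (intro sum.cong) (auto simp: scalar_prod_def)
  also have "\<dots> = (\<Sum>k\<in>{0..<n}. \<Sum>a\<in>A. G $$ (r, k) * w a $ k)" by (rule sum.swap)
  also have "\<dots> = (G *\<^sub>v vec n (\<lambda>k. \<Sum>a\<in>A. w a $ k)) $ r"
    using G r by (auto simp: scalar_prod_def sum_distrib_left)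
  finally show ?thesis .
qed

definition inj_at :: "('e \<Rightarrow> 'v) \<Rightarrow> ('e \<Rightarrow> 'v) \<Rightarrow> 'v \<Rightarrow> ('v,'e,'k::field) drep \<Rightarrow> bool" where
  "inj_at s t i M \<longleftrightarrow> (\<forall>x. (\<forall>a. t a = i \<longrightarrow> x a \<in> carrier_vec (dimv M (s a))) \<longrightarrow>
     (\<forall>r<dimv M i. (\<Sum>a\<in>{a. t a = i}. (amap M a *\<^sub>v x a) $ r) = 0) \<longrightarrow>
     (\<forall>a. t a = i \<longrightarrow> x a = 0\<^sub>v (dimv M (s a))))"

lemma inj_atI:
  assumes "\<And>x a. (\<forall>a. t a = i \<longrightarrow> x a \<in> carrier_vec (dimv M (s a))) \<Longrightarrow>
     (\<forall>r<dimv M i. (\<Sum>a\<in>{a. t a = i}. (amap M a *\<^sub>v x a) $ r) = 0) \<Longrightarrow> t a = i \<Longrightarrow>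
     x a = 0\<^sub>v (dimv M (s a))"
  shows "inj_at s t i M"
  unfolding inj_at_def using assms by blast

lemma inj_atD:
  assumes "inj_at s t i M" "\<forall>a. t a = i \<longrightarrow> x a \<in> carrier_vec (dimv M (s a))"
     "\<forall>r<dimv M i. (\<Sum>a\<in>{a. t a = i}. (amap M a *\<^sub>v x a) $ r) = 0" "t a = i"
  shows "x a = 0\<^sub>v (dimv M (s a))"
  using assms unfolding inj_at_def by blast

lemma Delta_dimv: "dimv (Delta s t j) v = length (path_basis s t j v)"
  unfolding Delta_def drep.select_convs by (rule refl)

lemma Delta_amap: "amap (Delta s t j) a =
   mat (length (path_basis s t j (t a))) (length (path_basis s t j (s a)))
               (\<lambda>(r, c). if path_basis s t j (t a) ! r = a # (path_basis s t j (s a) ! c)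
                         then 1 else 0)"
  unfolding Delta_def drep.select_convs by (rule refl)

lemma Delta_amap_carrier: "amap (Delta s t j) a \<in> carrier_mat (dimv (Delta s t j) (t a)) (dimv (Delta s t j) (s a))"
  unfolding Delta_amap Delta_dimv by simp

lemma inj_Delta:
  fixes s t :: "'e::finite \<Rightarrow> 'v::finite"
  assumes ac: "acyclic {(s a, t a) | a. True}"
  shows "inj_at s t i (Delta s t j :: ('v,'e,'k::field) drep)"
proof (rule inj_atI)
  define B where "B = path_basis s t j"
  have dB: "\<And>v. distinct (B v)" and sB: "\<And>v. set (B v) = {p. qpath s t j v p}"
    unfolding B_def using path_basis_props[OF finite_paths[OF ac]] by auto
  fix x :: "'e \<Rightarrow> 'k vec" and a0
  assume xc: "\<forall>a. t a = i \<longrightarrow> x a \<in> carrier_vec (dimv (Delta s t j :: ('v,'e,'k) drep) (s a))"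
    and sum0: "\<forall>r<dimv (Delta s t j :: ('v,'e,'k) drep) i. (\<Sum>a\<in>{a. t a = i}. (amap (Delta s t j) a *\<^sub>v x a) $ r) = 0"
    and a0: "t a0 = i"
  have xc': "\<And>a. t a = i \<Longrightarrow> x a \<in> carrier_vec (length (B (s a)))"
    using xc unfolding Delta_dimv B_def by auto
  show "x a0 = 0\<^sub>v (dimv (Delta s t j :: ('v,'e,'k) drep) (s a0))"
  proof (rule eq_vecI)
    show "dim_vec (x a0) = dim_vec (0\<^sub>v (dimv (Delta s t j :: ('v,'e,'k) drep) (s a0)))"
      using xc a0 by simp
    fix c0 assume "c0 < dim_vec (0\<^sub>v (dimv (Delta s t j :: ('v,'e,'k) drep) (s a0)))"
    then have c0: "c0 < length (B (s a0))" unfolding Delta_dimv B_def by simp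
    define p where "p = B (s a0) ! c0"
    have "p \<in> set (B (s a0))" unfolding p_def using c0 by simp
    then have "qpath s t j (s a0) p" unfolding sB by simp
    then have "qpath s t j (t a0) (a0 # p)" by (rule qpath.cons)
    then have "a0 # p \<in> set (B i)" unfolding sB a0[symmetric] by simp
    then obtain r0 where r0: "r0 < length (B i)" "B i ! r0 = a0 # p" by (metis in_set_conv_nth)
    have tm: "(amap (Delta s t j) a *\<^sub>v x a) $ r0 = (if a = a0 then x a0 $ c0 else 0)"
      if ta: "t a = i" for a
    proof -
      have "(amap (Delta s t j) a *\<^sub>v x a) $ r0 =
          (\<Sum>c\<in>{0..<length (B (s a))}. (if B i ! r0 = a # B (s a) ! c then 1 else 0) * x a $ c)"
        unfolding Delta_amap B_def[symmetric] using r0 ta xc'[OF ta] by (auto simp: scalar_prod_def)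
      also have "\<dots> = (\<Sum>c\<in>{0..<length (B (s a))}. (if a = a0 \<and> c = c0 then x a $ c else 0))"
      proof (intro sum.cong refl)
        fix c assume c: "c \<in> {0..<length (B (s a))}"
        have "(B i ! r0 = a # B (s a) ! c) = (a = a0 \<and> c = c0)"
        proof
          assume "B i ! r0 = a # B (s a) ! c"
          then have aa: "a = a0" and "B (s a) ! c = p" using r0 by auto
          then have "B (s a0) ! c = B (s a0) ! c0" unfolding p_def by simp
          then show "a = a0 \<and> c = c0" using aa c c0 dB nth_eq_iff_index_eq by fastforce
        qed (use r0 p_def in auto)
        then show "(if B i ! r0 = a # B (s a) ! c then 1 else 0) * x a $ c = (if a = a0 \<and> c = c0 then x a $ c else 0)"
          by simp
      qed
      also have "\<dots> = (if a = a0 then x a0 $ c0 else 0)"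
        using c0 by (cases "a = a0") auto
      finally show ?thesis .
    qed
    have "r0 < dimv (Delta s t j :: ('v,'e,'k) drep) i" using r0 unfolding Delta_dimv B_def by simp
    then have "0 = (\<Sum>a\<in>{a. t a = i}. (amap (Delta s t j) a *\<^sub>v x a) $ r0)" using sum0 by simp
    also have "\<dots> = (\<Sum>a\<in>{a. t a = i}. (if a = a0 then x a0 $ c0 else 0))"
      using tm by (intro sum.cong) auto
    also have "\<dots> = x a0 $ c0" using a0 by simp
    finally show "x a0 $ c0 = 0\<^sub>v (dimv (Delta s t j :: ('v,'e,'k) drep) (s a0)) $ c0"
      using c0 unfolding Delta_dimv B_def by simp
  qed
qed




lemma inj_step:
  assumes DM: "is_Drep s t M" and DM': "is_Drep s t M'"
    and ses: "is_ses s t M' M N f g"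
    and NC: "\<forall>a. amap N a \<in> carrier_mat (dimv N (t a)) (dimv N (s a))"
    and I': "inj_at s t i M'" and IN: "inj_at s t i N"
  shows "inj_at s t i M"
proof (rule inj_atI)
  fix x :: "'a \<Rightarrow> 'c vec" and a0
  assume xc: "\<forall>a. t a = i \<longrightarrow> x a \<in> carrier_vec (dimv M (s a))"
    and sum0: "\<forall>r<dimv M i. (\<Sum>a\<in>{a. t a = i}. (amap M a *\<^sub>v x a) $ r) = 0"
    and a0: "t a0 = i"
  let ?A = "{a. t a = i}"
  have fC: "\<And>v. f v \<in> carrier_mat (dimv M v) (dimv M' v)"
   and gC: "\<And>v. g v \<in> carrier_mat (dimv N v) (dimv M v)"
   and fh: "\<And>a. amap M a * f (s a) = f (t a) * amap M' a"
   and gh: "\<And>a. amap N a * g (s a) = g (t a) * amap M a"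
   and finj: "\<And>v x. x \<in> carrier_vec (dimv M' v) \<Longrightarrow> f v *\<^sub>v x = 0\<^sub>v (dimv M v) \<Longrightarrow> x = 0\<^sub>v (dimv M' v)"
   and gker: "\<And>v y. y \<in> carrier_vec (dimv M v) \<Longrightarrow> g v *\<^sub>v y = 0\<^sub>v (dimv N v) \<Longrightarrow>
        \<exists>x \<in> carrier_vec (dimv M' v). y = f v *\<^sub>v x"
    using ses unfolding is_ses_def is_hom_def by blast+
  have MC: "\<And>a. amap M a \<in> carrier_mat (dimv M (t a)) (dimv M (s a))"
    using DM unfolding is_Drep_def by blast
  have M'C: "\<And>a. amap M' a \<in> carrier_mat (dimv M' (t a)) (dimv M' (s a))"
    using DM' unfolding is_Drep_def by blast
  define w where "w = vec (dimv M i) (\<lambda>k. \<Sum>a\<in>?A. (amap M a *\<^sub>v x a) $ k)"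
  have w0: "w = 0\<^sub>v (dimv M i)" unfolding w_def using sum0 by (intro eq_vecI) auto
  define x' where "x' a = g (s a) *\<^sub>v x a" for a
  have x'0: "x' a = 0\<^sub>v (dimv N (s a))" if ta: "t a = i" for a
  proof (rule inj_atD[OF IN _ _ ta])
    show "\<forall>a. t a = i \<longrightarrow> x' a \<in> carrier_vec (dimv N (s a))"
      unfolding x'_def using gC xc by (metis mult_mat_vec_carrier)
    show "\<forall>r<dimv N i. (\<Sum>a\<in>?A. (amap N a *\<^sub>v x' a) $ r) = 0"
    proof (intro allI impI)
      fix r assume r: "r < dimv N i"
      have "(\<Sum>a\<in>?A. (amap N a *\<^sub>v x' a) $ r) = (\<Sum>a\<in>?A. (g i *\<^sub>v (amap M a *\<^sub>v x a)) $ r)"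
      proof (intro sum.cong refl)
        fix a assume "a \<in> ?A"
        then have ta: "t a = i" by simp
        have "amap N a *\<^sub>v x' a = (amap N a * g (s a)) *\<^sub>v x a"
          unfolding x'_def using NC gC xc ta by (metis assoc_mult_mat_vec)
        also have "\<dots> = (g (t a) * amap M a) *\<^sub>v x a" by (simp add: gh)
        also have "\<dots> = g (t a) *\<^sub>v (amap M a *\<^sub>v x a)"
          using MC gC xc ta by (metis assoc_mult_mat_vec)
        finally show "(amap N a *\<^sub>v x' a) $ r = (g i *\<^sub>v (amap M a *\<^sub>v x a)) $ r" using ta by simp
      qed
      also have "\<dots> = (g i *\<^sub>v w) $ r" unfolding w_def
      proof (rule lin_sum[OF gC _ r], intro ballI)
        fix a assume "a \<in> ?A"
        then have ta: "t a = i" by simp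
        show "amap M a *\<^sub>v x a \<in> carrier_vec (dimv M i)"
          using mult_mat_vec_carrier[OF MC[of a] xc[rule_format, OF ta]] ta by simp
      qed
      also have "\<dots> = 0" unfolding w0 using mult_zero_vec'[OF gC[of i]] r by simp
      finally show "(\<Sum>a\<in>?A. (amap N a *\<^sub>v x' a) $ r) = 0" .
    qed
  qed
  define z where "z a = (SOME z. z \<in> carrier_vec (dimv M' (s a)) \<and> x a = f (s a) *\<^sub>v z)" for a
  have z: "z a \<in> carrier_vec (dimv M' (s a)) \<and> x a = f (s a) *\<^sub>v z a" if ta: "t a = i" for a
  proof -
    have "\<exists>z. z \<in> carrier_vec (dimv M' (s a)) \<and> x a = f (s a) *\<^sub>v z"
      using gker[of "x a" "s a"] xc x'0[OF ta] ta unfolding x'_def by blast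
    then show ?thesis unfolding z_def by (rule someI_ex)
  qed
  define w' where "w' = vec (dimv M' i) (\<lambda>k. \<Sum>a\<in>?A. (amap M' a *\<^sub>v z a) $ k)"
  have "f i *\<^sub>v w' = 0\<^sub>v (dimv M i)"
  proof (rule eq_vecI)
    show "dim_vec (f i *\<^sub>v w') = dim_vec (0\<^sub>v (dimv M i))" using fC[of i] by simp
    fix r assume "r < dim_vec (0\<^sub>v (dimv M i))"
    then have r: "r < dimv M i" by simp
    have "(f i *\<^sub>v w') $ r = (\<Sum>a\<in>?A. (f i *\<^sub>v (amap M' a *\<^sub>v z a)) $ r)"
      unfolding w'_def
    proof (rule lin_sum[OF fC _ r, symmetric], intro ballI)
      fix a assume "a \<in> ?A"
      then have ta: "t a = i" by simp
      show "amap M' a *\<^sub>v z a \<in> carrier_vec (dimv M' i)"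
        using mult_mat_vec_carrier[OF M'C[of a] conjunct1[OF z[OF ta]]] ta by simp
    qed
    also have "\<dots> = (\<Sum>a\<in>?A. (amap M a *\<^sub>v x a) $ r)"
    proof (intro sum.cong refl)
      fix a assume "a \<in> ?A"
      then have ta: "t a = i" by simp
      have "amap M a *\<^sub>v x a = (amap M a * f (s a)) *\<^sub>v z a"
        using z[OF ta] MC fC by (metis assoc_mult_mat_vec)
      also have "\<dots> = (f (t a) * amap M' a) *\<^sub>v z a" by (simp add: fh)
      also have "\<dots> = f (t a) *\<^sub>v (amap M' a *\<^sub>v z a)"
        using z[OF ta] M'C fC by (metis assoc_mult_mat_vec)
      finally show "(f i *\<^sub>v (amap M' a *\<^sub>v z a)) $ r = (amap M a *\<^sub>v x a) $ r" using ta by simp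
    qed
    also have "\<dots> = 0" using sum0 r by simp
    finally show "(f i *\<^sub>v w') $ r = 0\<^sub>v (dimv M i) $ r" using r by simp
  qed
  then have w'0: "w' = 0\<^sub>v (dimv M' i)" using finj[of w' i] unfolding w'_def by simp
  have "z a0 = 0\<^sub>v (dimv M' (s a0))"
  proof (rule inj_atD[OF I' _ _ a0])
    show "\<forall>a. t a = i \<longrightarrow> z a \<in> carrier_vec (dimv M' (s a))" using z by blast
    show "\<forall>r<dimv M' i. (\<Sum>a\<in>?A. (amap M' a *\<^sub>v z a) $ r) = 0"
    proof (intro allI impI)
      fix r assume r: "r < dimv M' i"
      have "w' $ r = 0" using w'0 r by simp
      then show "(\<Sum>a\<in>?A. (amap M' a *\<^sub>v z a) $ r) = 0" unfolding w'_def using r by simp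
    qed
  qed
  then show "x a0 = 0\<^sub>v (dimv M (s a0))" using z[OF a0] mult_zero_vec'[OF fC[of "s a0"]] by simp
qed

lemma Delta_filtered_inj:
  fixes s t :: "'e::finite \<Rightarrow> 'v::finite"
  assumes ac: "acyclic {(s a, t a) | a. True}"
  shows "Delta_filtered s t (M :: ('v,'e,'k::field) drep) \<Longrightarrow> is_Drep s t M \<and> inj_at s t i M"
proof (induction rule: Delta_filtered.induct)
  case (zero M)
  have "inj_at s t i M"
  proof (rule inj_atI)
    fix x :: "'e \<Rightarrow> 'k vec" and a
    assume xa: "\<forall>a. t a = i \<longrightarrow> x a \<in> carrier_vec (dimv M (s a))" and ta: "t a = i"
    have d0: "dimv M (s a) = 0" using zero(2) by blast
    have "x a \<in> carrier_vec (dimv M (s a))" using xa ta by blast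
    then have "dim_vec (x a) = 0" using d0 by (metis carrier_vecD)
    then have "x a = 0\<^sub>v 0" by (rule vec_of_dim_0[THEN iffD1])
    then show "x a = 0\<^sub>v (dimv M (s a))" unfolding d0 .
  qed
  then show ?case by (rule conjI[OF zero(1)])
next
  case (step M' M j f g)
  have IH: "is_Drep s t M'" "inj_at s t i M'" using step.IH by auto
  have DC: "\<forall>a. amap (Delta s t j :: ('v,'e,'k) drep) a \<in> carrier_mat (dimv (Delta s t j :: ('v,'e,'k) drep) (t a)) (dimv (Delta s t j :: ('v,'e,'k) drep) (s a))"
    by (intro allI Delta_amap_carrier)
  have "inj_at s t i M"
    by (rule inj_step[OF step.hyps(2) IH(1) step.hyps(3) DC IH(2) inj_Delta[OF ac]])
  then show ?case by (rule conjI[OF step.hyps(2)])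
qed




lemma mult_unit_index:
  fixes A :: "'a::semiring_1 mat"
  assumes "A \<in> carrier_mat nr nc" "r < nr" "c < nc"
  shows "(A *\<^sub>v unit_vec nc c) $ r = A $$ (r, c)"
proof -
  have "row A r \<bullet> unit_vec nc c = row A r $ c" by (rule scalar_prod_right_unit) (rule assms(3))
  then show ?thesis using assms by simp
qed

lemma commute_gen:
  fixes XE :: "'k::field mat"
  assumes XE: "XE \<in> carrier_mat ew eu" and XM: "XM \<in> carrier_mat mw mu" and XN: "XN \<in> carrier_mat nw nu"
    and gu: "gu \<in> carrier_mat mu eu" and gw: "gw \<in> carrier_mat mw ew" and fw: "fw \<in> carrier_mat ew nw"
    and Ru: "Ru \<in> carrier_mat nu eu" and Rw: "Rw \<in> carrier_mat nw ew"
    and hu: "hu \<in> carrier_mat eu mu" and hw: "hw \<in> carrier_mat ew mw"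
    and c1: "gw * XE = XM * gu" and c2: "Rw * XE = XN * Ru"
    and r1: "Ru * hu = 0\<^sub>m nu mu" and r2: "Rw * hw = 0\<^sub>m nw mw"
    and s1: "gu * hu = 1\<^sub>m mu" and s2: "gw * hw = 1\<^sub>m mw" and rf: "Rw * fw = 1\<^sub>m nw"
    and ker: "\<forall>y\<in>carrier_vec ew. gw *\<^sub>v y = 0\<^sub>v mw \<longrightarrow> (\<exists>x\<in>carrier_vec nw. y = fw *\<^sub>v x)"
  shows "XE * hu = hw * XM"
proof -
  define D where "D = XE * hu - hw * XM"
  have DC: "D \<in> carrier_mat ew mu" unfolding D_def using XE hu hw XM by auto
  have "gw * D = gw * (XE * hu) - gw * (hw * XM)"
    unfolding D_def by (rule mult_minus_distrib_mat[OF gw]) (use XE hu hw XM in auto)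
  also have "gw * (XE * hu) = (gw * XE) * hu" using gw XE hu by simp
  also have "\<dots> = XM * (gu * hu)" unfolding c1 using XM gu hu by simp
  also have "\<dots> = XM" unfolding s1 using XM by simp
  also have "gw * (hw * XM) = (gw * hw) * XM" using gw hw XM by simp
  also have "\<dots> = XM" unfolding s2 using XM by simp
  finally have gD: "gw * D = 0\<^sub>m mw mu" using XM by simp
  have "Rw * D = Rw * (XE * hu) - Rw * (hw * XM)"
    unfolding D_def by (rule mult_minus_distrib_mat[OF Rw]) (use XE hu hw XM in auto)
  also have "Rw * (XE * hu) = (Rw * XE) * hu" using Rw XE hu by simp
  also have "\<dots> = XN * (Ru * hu)" unfolding c2 using XN Ru hu by simp
  also have "\<dots> = 0\<^sub>m nw mu" unfolding r1 using XN by simp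
  also have "Rw * (hw * XM) = (Rw * hw) * XM" using Rw hw XM by simp
  also have "\<dots> = 0\<^sub>m nw mu" unfolding r2 using XM by simp
  finally have RD: "Rw * D = 0\<^sub>m nw mu" by simp
  have Dcol: "D *\<^sub>v unit_vec mu c = 0\<^sub>v ew" if c: "c < mu" for c
  proof -
    define d where "d = D *\<^sub>v unit_vec mu c"
    have dC: "d \<in> carrier_vec ew" unfolding d_def using DC by simp
    have "gw *\<^sub>v d = (gw * D) *\<^sub>v unit_vec mu c" unfolding d_def using gw DC by simp
    also have "\<dots> = 0\<^sub>v mw" unfolding gD by (intro eq_vecI) auto
    finally obtain x where x: "x \<in> carrier_vec nw" "d = fw *\<^sub>v x" using ker dC by blast
    have "x = (Rw * fw) *\<^sub>v x" unfolding rf using x by simp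
    also have "\<dots> = Rw *\<^sub>v d" unfolding x(2) using Rw fw x by simp
    also have "\<dots> = (Rw * D) *\<^sub>v unit_vec mu c" unfolding d_def using Rw DC by simp
    also have "\<dots> = 0\<^sub>v nw" unfolding RD by (intro eq_vecI) auto
    finally have "x = 0\<^sub>v nw" .
    then show ?thesis using x(2) mult_zero_vec'[OF fw] unfolding d_def by simp
  qed
  show ?thesis
  proof (rule eq_matI)
    show "dim_row (XE * hu) = dim_row (hw * XM)" "dim_col (XE * hu) = dim_col (hw * XM)"
      using XE hu hw XM by auto
    fix r c assume r: "r < dim_row (hw * XM)" and c: "c < dim_col (hw * XM)"
    then have r': "r < ew" and c': "c < mu" using hw XM by auto
    have "D $$ (r, c) = (D *\<^sub>v unit_vec mu c) $ r" using mult_unit_index[OF DC r' c'] by simp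
    also have "\<dots> = 0" unfolding Dcol[OF c'] using r' by simp
    finally have "D $$ (r, c) = 0" .
    moreover have "D $$ (r, c) = (XE * hu) $$ (r, c) - (hw * XM) $$ (r, c)"
      unfolding D_def using r' c' XE hu hw XM by simp
    ultimately show "(XE * hu) $$ (r, c) = (hw * XM) $$ (r, c)" by simp
  qed
qed




lemma Delta_smap: "smap (Delta s t j) a = 0\<^sub>m (length (path_basis s t j (s a))) (length (path_basis s t j (t a)))"
  unfolding Delta_def drep.select_convs by (rule refl)

lemma Delta_smap_carrier: "smap (Delta s t j) a \<in> carrier_mat (dimv (Delta s t j) (s a)) (dimv (Delta s t j) (t a))"
  unfolding Delta_smap Delta_dimv by simp

theorem mainTheorem9:
  fixes s t :: "'e::finite \<Rightarrow> 'v::finite"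
    and M :: "('v, 'e, 'k::field) drep"
    and i :: 'v
  assumes "alg_closed TYPE('k)"
    and "acyclic {(s a, t a) | a. True}"
    and "Delta_filtered s t M"
    and "\<forall>a. s a \<noteq> i"
  shows "Ext1_vanishes s t M (Delta s t i)"
  unfolding Ext1_vanishes_def
proof (intro allI impI)
  note ac = assms(2) and sink = assms(4)
  define N where "N = (Delta s t i :: ('v, 'e, 'k) drep)"
  fix E :: "('v, 'e, 'k) drep" and f g
  assume DE: "is_Drep s t E" and ses0: "is_ses s t (Delta s t i) E M f g"
  have ses: "is_ses s t N E M f g" using ses0 unfolding N_def .
  have DM: "is_Drep s t M" and IM: "inj_at s t i M"
    using Delta_filtered_inj[OF ac assms(3)] by auto
  have dN: "\<And>v. dimv N v = (if v = i then 1 else 0)" unfolding N_def by (rule dim_Delta_sink[OF sink])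
  have dN0: "\<And>a. dimv N (s a) = 0" using dN sink by simp
  have dNi: "dimv N i = 1" using dN by simp
  have NaC: "\<And>a. amap N a \<in> carrier_mat (dimv N (t a)) (dimv N (s a))"
    unfolding N_def by (rule Delta_amap_carrier)
  have NsC: "\<And>a. smap N a \<in> carrier_mat (dimv N (s a)) (dimv N (t a))"
    unfolding N_def by (rule Delta_smap_carrier)
  have EaC: "\<And>a. amap E a \<in> carrier_mat (dimv E (t a)) (dimv E (s a))"
   and EsC: "\<And>a. smap E a \<in> carrier_mat (dimv E (s a)) (dimv E (t a))"
    using DE unfolding is_Drep_def by blast+
  have MaC: "\<And>a. amap M a \<in> carrier_mat (dimv M (t a)) (dimv M (s a))"
   and MsC: "\<And>a. smap M a \<in> carrier_mat (dimv M (s a)) (dimv M (t a))"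
    using DM unfolding is_Drep_def by blast+
  have fC: "\<And>v. f v \<in> carrier_mat (dimv E v) (dimv N v)"
   and gC: "\<And>v. g v \<in> carrier_mat (dimv M v) (dimv E v)"
   and fha: "\<And>a. amap E a * f (s a) = f (t a) * amap N a"
   and fhs: "\<And>a. smap E a * f (t a) = f (s a) * smap N a"
   and gha: "\<And>a. amap M a * g (s a) = g (t a) * amap E a"
   and ghs: "\<And>a. smap M a * g (t a) = g (s a) * smap E a"
   and finj: "\<And>v x. x \<in> carrier_vec (dimv N v) \<Longrightarrow> f v *\<^sub>v x = 0\<^sub>v (dimv E v) \<Longrightarrow> x = 0\<^sub>v (dimv N v)"
   and gsurj: "\<And>v z. z \<in> carrier_vec (dimv M v) \<Longrightarrow> \<exists>y \<in> carrier_vec (dimv E v). g v *\<^sub>v y = z"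
   and gex: "\<And>v. \<forall>y \<in> carrier_vec (dimv E v). g v *\<^sub>v y = 0\<^sub>v (dimv M v)
              \<longleftrightarrow> (\<exists>x \<in> carrier_vec (dimv N v). y = f v *\<^sub>v x)"
    using ses unfolding is_ses_def is_hom_def by blast+
  have gker: "\<forall>y \<in> carrier_vec (dimv E v). g v *\<^sub>v y = 0\<^sub>v (dimv M v) \<longrightarrow> (\<exists>x \<in> carrier_vec (dimv N v). y = f v *\<^sub>v x)" for v
    using gex[of v] by blast
  have gf: "g v *\<^sub>v (f v *\<^sub>v x) = 0\<^sub>v (dimv M v)" if x: "x \<in> carrier_vec (dimv N v)" for v x
  proof -
    have "f v *\<^sub>v x \<in> carrier_vec (dimv E v)" using fC[of v] x by simp
    then show ?thesis using gex[of v] x by blast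
  qed
  let ?A = "{a. t a = i}"
  let ?n = "dimv E i"
  define f1 where "f1 = f i *\<^sub>v unit_vec 1 0"
  have f1C: "f1 \<in> carrier_vec ?n" unfolding f1_def using fC[of i] dNi by simp
  have f1nz: "f1 \<noteq> 0\<^sub>v ?n"
  proof
    assume "f1 = 0\<^sub>v ?n"
    then have "unit_vec 1 0 = 0\<^sub>v (dimv N i)" using finj[of "unit_vec 1 0" i] dNi unfolding f1_def by simp
    then show False using dNi unit_vec_nonzero[of 0 1] by simp
  qed
  define J where "J = (SIGMA a:?A. {0..<dimv E (s a)})"
  define cv where "cv = (\<lambda>(a, k). col (amap E a) k)"
  have finJ: "finite J" unfolding J_def by (intro finite_SigmaI) auto
  have cvC: "\<forall>j\<in>J. cv j \<in> carrier_vec ?n" unfolding J_def cv_def using EaC by auto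
  have "\<exists>y\<in>carrier_vec ?n. y \<bullet> f1 = 1 \<and> (\<forall>j\<in>J. y \<bullet> cv j = 0)"
  proof -
    from fredholm[OF finJ cvC f1C] show ?thesis
    proof
      assume "\<exists>c. \<forall>r<?n. f1 $ r = (\<Sum>j\<in>J. c j * cv j $ r)"
      then obtain c where c: "\<forall>r<?n. f1 $ r = (\<Sum>j\<in>J. c j * cv j $ r)" by blast
      define x where "x a = vec (dimv E (s a)) (\<lambda>k. c (a, k))" for a
      have xC: "x a \<in> carrier_vec (dimv E (s a))" for a unfolding x_def by simp
      have f1s: "f1 $ r = (\<Sum>a\<in>?A. (amap E a *\<^sub>v x a) $ r)" if r: "r < ?n" for r
      proof -
        have "f1 $ r = (\<Sum>a\<in>?A. \<Sum>k\<in>{0..<dimv E (s a)}. c (a, k) * cv (a, k) $ r)"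
          using c r unfolding J_def by (simp add: sum.Sigma)
        also have "\<dots> = (\<Sum>a\<in>?A. (amap E a *\<^sub>v x a) $ r)"
        proof (intro sum.cong refl)
          fix a assume "a \<in> ?A"
          then have ta: "t a = i" by simp
          show "(\<Sum>k\<in>{0..<dimv E (s a)}. c (a, k) * cv (a, k) $ r) = (amap E a *\<^sub>v x a) $ r"
            using EaC[of a] ta r unfolding cv_def x_def by (auto simp: scalar_prod_def ac_simps intro: sum.cong)
        qed
        finally show ?thesis .
      qed
      have gx: "g (s a) *\<^sub>v x a = 0\<^sub>v (dimv M (s a))" if ta: "t a = i" for a
      proof (rule inj_atD[OF IM _ _ ta])
        show "\<forall>a. t a = i \<longrightarrow> g (s a) *\<^sub>v x a \<in> carrier_vec (dimv M (s a))"
          using gC xC by (metis mult_mat_vec_carrier)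
        show "\<forall>r<dimv M i. (\<Sum>a\<in>?A. (amap M a *\<^sub>v (g (s a) *\<^sub>v x a)) $ r) = 0"
        proof (intro allI impI)
          fix r assume r: "r < dimv M i"
          have "(\<Sum>a\<in>?A. (amap M a *\<^sub>v (g (s a) *\<^sub>v x a)) $ r) = (\<Sum>a\<in>?A. (g i *\<^sub>v (amap E a *\<^sub>v x a)) $ r)"
          proof (intro sum.cong refl)
            fix a assume "a \<in> ?A"
            then have ta: "t a = i" by simp
            have "amap M a *\<^sub>v (g (s a) *\<^sub>v x a) = (amap M a * g (s a)) *\<^sub>v x a"
              using MaC[of a] gC[of "s a"] xC[of a] by simp
            also have "\<dots> = (g (t a) * amap E a) *\<^sub>v x a" by (simp add: gha)
            also have "\<dots> = g (t a) *\<^sub>v (amap E a *\<^sub>v x a)"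
              using EaC[of a] gC[of "t a"] xC[of a] by simp
            finally show "(amap M a *\<^sub>v (g (s a) *\<^sub>v x a)) $ r = (g i *\<^sub>v (amap E a *\<^sub>v x a)) $ r"
              using ta by simp
          qed
          also have "\<dots> = (g i *\<^sub>v vec ?n (\<lambda>k. \<Sum>a\<in>?A. (amap E a *\<^sub>v x a) $ k)) $ r"
          proof (rule lin_sum[OF gC _ r], intro ballI)
            fix a assume "a \<in> ?A"
            then have ta: "t a = i" by simp
            show "amap E a *\<^sub>v x a \<in> carrier_vec ?n"
              using mult_mat_vec_carrier[OF EaC[of a] xC[of a]] ta by simp
          qed
          also have "vec ?n (\<lambda>k. \<Sum>a\<in>?A. (amap E a *\<^sub>v x a) $ k) = f1"
            using f1s f1C by (intro eq_vecI) auto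
          also have "g i *\<^sub>v f1 = 0\<^sub>v (dimv M i)" unfolding f1_def
            by (rule gf) (use dNi in simp)
          finally show "(\<Sum>a\<in>?A. (amap M a *\<^sub>v (g (s a) *\<^sub>v x a)) $ r) = 0" using r by simp
        qed
      qed
      have x0: "x a = 0\<^sub>v (dimv E (s a))" if ta: "t a = i" for a
      proof -
        obtain z where z: "z \<in> carrier_vec (dimv N (s a))" "x a = f (s a) *\<^sub>v z"
          using gker[of "s a"] xC[of a] gx[OF ta] by blast
        have "dim_vec z = 0" using z(1) dN0[of a] by (metis carrier_vecD)
        then have "z = 0\<^sub>v 0" by (rule vec_of_dim_0[THEN iffD1])
        moreover have "f (s a) \<in> carrier_mat (dimv E (s a)) 0" using fC[of "s a"] dN0[of a] by simp
        ultimately show ?thesis using z(2) mult_zero_vec' by metis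
      qed
      have "f1 = 0\<^sub>v ?n"
      proof (rule eq_vecI)
        show "dim_vec f1 = dim_vec (0\<^sub>v ?n)" using f1C by simp
        fix r assume "r < dim_vec (0\<^sub>v ?n)"
        then have r: "r < ?n" by simp
        have "f1 $ r = (\<Sum>a\<in>?A. (amap E a *\<^sub>v x a) $ r)" by (rule f1s[OF r])
        also have "\<dots> = 0"
        proof (rule sum.neutral, intro ballI)
          fix a assume "a \<in> ?A"
          then have ta: "t a = i" by simp
          show "(amap E a *\<^sub>v x a) $ r = 0"
            unfolding x0[OF ta] mult_zero_vec'[OF EaC[of a]] using ta r by simp
        qed
        finally show "f1 $ r = 0\<^sub>v ?n $ r" using r by simp
      qed
      then show ?thesis using f1nz by blast
    qed
  qed
  then obtain y where yC: "y \<in> carrier_vec ?n" and yf1: "y \<bullet> f1 = 1" and yJ: "\<forall>j\<in>J. y \<bullet> cv j = 0"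
    by blast
  define R where "R v = mat (dimv N v) (dimv E v) (\<lambda>(_, c). y $ c)" for v
  define zz where "zz v c = (SOME z. z \<in> carrier_vec (dimv E v) \<and> g v *\<^sub>v z = unit_vec (dimv M v) c)" for v c
  define Y where "Y v = mat (dimv E v) (dimv M v) (\<lambda>(r, c). zz v c $ r)" for v
  define h where "h v = (1\<^sub>m (dimv E v) - f v * R v) * Y v" for v
  have RC: "R v \<in> carrier_mat (dimv N v) (dimv E v)" for v unfolding R_def by simp
  have YC: "Y v \<in> carrier_mat (dimv E v) (dimv M v)" for v unfolding Y_def by simp
  have PC: "1\<^sub>m (dimv E v) - f v * R v \<in> carrier_mat (dimv E v) (dimv E v)" for v
    using fC[of v] RC[of v] by auto
  have hC: "h v \<in> carrier_mat (dimv E v) (dimv M v)" for v unfolding h_def using PC[of v] YC[of v] by auto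
  have zz: "zz v c \<in> carrier_vec (dimv E v) \<and> g v *\<^sub>v zz v c = unit_vec (dimv M v) c" if c: "c < dimv M v" for v c
  proof -
    have "\<exists>z. z \<in> carrier_vec (dimv E v) \<and> g v *\<^sub>v z = unit_vec (dimv M v) c"
      using gsurj[of "unit_vec (dimv M v) c" v] by auto
    then show ?thesis unfolding zz_def by (rule someI_ex)
  qed
  have gY: "g v * Y v = 1\<^sub>m (dimv M v)" for v
  proof (rule eq_matI)
    show "dim_row (g v * Y v) = dim_row (1\<^sub>m (dimv M v))" "dim_col (g v * Y v) = dim_col (1\<^sub>m (dimv M v))"
      using gC[of v] YC[of v] by auto
    fix r c assume "r < dim_row (1\<^sub>m (dimv M v))" "c < dim_col (1\<^sub>m (dimv M v))"
    then have r: "r < dimv M v" and c: "c < dimv M v" by auto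
    have colY: "col (Y v) c = zz v c" unfolding Y_def using c zz[OF c] by (intro eq_vecI) auto
    have "(g v * Y v) $$ (r, c) = row (g v) r \<bullet> col (Y v) c"
      using gC[of v] YC[of v] r c by simp
    also have "\<dots> = (g v *\<^sub>v zz v c) $ r" unfolding colY using gC[of v] r by simp
    also have "\<dots> = 1\<^sub>m (dimv M v) $$ (r, c)" using zz[OF c] r c by simp
    finally show "(g v * Y v) $$ (r, c) = 1\<^sub>m (dimv M v) $$ (r, c)" .
  qed
  have gfm: "g v * f v = 0\<^sub>m (dimv M v) (dimv N v)" for v
  proof (rule eq_matI)
    show "dim_row (g v * f v) = dim_row (0\<^sub>m (dimv M v) (dimv N v))"
      "dim_col (g v * f v) = dim_col (0\<^sub>m (dimv M v) (dimv N v))"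
      using gC[of v] fC[of v] by auto
    fix r c assume "r < dim_row (0\<^sub>m (dimv M v) (dimv N v))" "c < dim_col (0\<^sub>m (dimv M v) (dimv N v))"
    then have r: "r < dimv M v" and c: "c < dimv N v" by auto
    have gfC: "g v * f v \<in> carrier_mat (dimv M v) (dimv N v)" using gC[of v] fC[of v] by auto
    have "(g v * f v) $$ (r, c) = ((g v * f v) *\<^sub>v unit_vec (dimv N v) c) $ r"
      using mult_unit_index[OF gfC r c] by simp
    also have "\<dots> = (g v *\<^sub>v (f v *\<^sub>v unit_vec (dimv N v) c)) $ r"
      using gC[of v] fC[of v] by simp
    also have "\<dots> = 0" using gf[of "unit_vec (dimv N v) c" v] r by simp
    finally show "(g v * f v) $$ (r, c) = 0\<^sub>m (dimv M v) (dimv N v) $$ (r, c)" using r c by simp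
  qed
  have Rf: "R v * f v = 1\<^sub>m (dimv N v)" for v
  proof (rule eq_matI)
    show "dim_row (R v * f v) = dim_row (1\<^sub>m (dimv N v))" "dim_col (R v * f v) = dim_col (1\<^sub>m (dimv N v))"
      using RC[of v] fC[of v] by auto
    fix r c assume "r < dim_row (1\<^sub>m (dimv N v))" "c < dim_col (1\<^sub>m (dimv N v))"
    then have r: "r < dimv N v" and c: "c < dimv N v" by auto
    then have vi: "v = i" and r0: "r = 0" and c0: "c = 0" using dN[of v] by (auto split: if_splits)
    have rowR: "row (R i) 0 = y" unfolding R_def using yC dNi by (intro eq_vecI) auto
    have colf: "col (f i) 0 = f1" unfolding f1_def
    proof (rule eq_vecI)
      fix k assume "k < dim_vec (f i *\<^sub>v unit_vec 1 0)"
      then have k: "k < ?n" using fC[of i] by simp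
      show "col (f i) 0 $ k = (f i *\<^sub>v unit_vec 1 0) $ k"
        using mult_unit_index[of "f i" ?n 1 k 0] fC[of i] dNi k by simp
    qed (use fC[of i] dNi in simp)
    have "(R i * f i) $$ (0, 0) = row (R i) 0 \<bullet> col (f i) 0"
      using RC[of i] fC[of i] dNi by simp
    also have "\<dots> = 1" unfolding rowR colf by (rule yf1)
    finally show "(R v * f v) $$ (r, c) = 1\<^sub>m (dimv N v) $$ (r, c)" using vi r0 c0 dNi by simp
  qed
  have minus0: "A - 0\<^sub>m nr nc = A" if "A \<in> carrier_mat nr nc" for A :: "'k mat" and nr nc
    using that by (intro eq_matI) auto
  have minusA: "A - A = 0\<^sub>m nr nc" if "A \<in> carrier_mat nr nc" for A :: "'k mat" and nr nc
    using that by (intro eq_matI) auto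
  have gh: "g v * h v = 1\<^sub>m (dimv M v)" for v
  proof -
    have "g v * h v = (g v * (1\<^sub>m (dimv E v) - f v * R v)) * Y v"
      unfolding h_def using gC[of v] PC[of v] YC[of v] by simp
    also have "g v * (1\<^sub>m (dimv E v) - f v * R v) = g v * 1\<^sub>m (dimv E v) - g v * (f v * R v)"
      by (rule mult_minus_distrib_mat[OF gC[of v]]) (use fC[of v] RC[of v] in auto)
    also have "g v * (f v * R v) = (g v * f v) * R v" using gC[of v] fC[of v] RC[of v] by simp
    also have "\<dots> = 0\<^sub>m (dimv M v) (dimv E v)" unfolding gfm using RC[of v] by simp
    also have "g v * 1\<^sub>m (dimv E v) = g v" using gC[of v] by simp
    also have "g v - 0\<^sub>m (dimv M v) (dimv E v) = g v" by (rule minus0[OF gC[of v]])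
    finally show ?thesis using gY[of v] by simp
  qed
  have Rh: "R v * h v = 0\<^sub>m (dimv N v) (dimv M v)" for v
  proof -
    have "R v * h v = (R v * (1\<^sub>m (dimv E v) - f v * R v)) * Y v"
      unfolding h_def using RC[of v] PC[of v] YC[of v] by simp
    also have "R v * (1\<^sub>m (dimv E v) - f v * R v) = R v * 1\<^sub>m (dimv E v) - R v * (f v * R v)"
      by (rule mult_minus_distrib_mat[OF RC[of v]]) (use fC[of v] RC[of v] in auto)
    also have "R v * (f v * R v) = (R v * f v) * R v" using RC[of v] fC[of v] by simp
    also have "\<dots> = R v" unfolding Rf using RC[of v] by simp
    also have "R v * 1\<^sub>m (dimv E v) = R v" using RC[of v] by simp
    also have "R v - R v = 0\<^sub>m (dimv N v) (dimv E v)" by (rule minusA[OF RC[of v]])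
    finally show ?thesis using YC[of v] by simp
  qed
  have Ra: "R (t a) * amap E a = amap N a * R (s a)" for a
  proof (rule eq_matI)
    show "dim_row (R (t a) * amap E a) = dim_row (amap N a * R (s a))"
      "dim_col (R (t a) * amap E a) = dim_col (amap N a * R (s a))"
      using RC[of "t a"] RC[of "s a"] EaC[of a] NaC[of a] by auto
    fix r c assume "r < dim_row (amap N a * R (s a))" "c < dim_col (amap N a * R (s a))"
    then have r: "r < dimv N (t a)" and c: "c < dimv E (s a)" using NaC[of a] RC[of "s a"] by auto
    then have ta: "t a = i" using dN[of "t a"] by (auto split: if_splits)
    have rowR: "row (R (t a)) r = y" unfolding R_def using yC r ta by (intro eq_vecI) auto
    have "(R (t a) * amap E a) $$ (r, c) = row (R (t a)) r \<bullet> col (amap E a) c"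
      using RC[of "t a"] EaC[of a] r c by simp
    also have "\<dots> = y \<bullet> cv (a, c)" unfolding rowR cv_def by simp
    also have "\<dots> = 0" using yJ ta c unfolding J_def by auto
    also have "0 = (amap N a * R (s a)) $$ (r, c)"
      using NaC[of a] RC[of "s a"] r c dN0[of a] by (simp add: scalar_prod_def)
    finally show "(R (t a) * amap E a) $$ (r, c) = (amap N a * R (s a)) $$ (r, c)" .
  qed
  have Rs: "R (s a) * smap E a = smap N a * R (t a)" for a
  proof (rule eq_matI)
    show "dim_row (R (s a) * smap E a) = dim_row (smap N a * R (t a))"
      "dim_col (R (s a) * smap E a) = dim_col (smap N a * R (t a))"
      using RC[of "t a"] RC[of "s a"] EsC[of a] NsC[of a] by auto
    fix r c assume "r < dim_row (smap N a * R (t a))"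
    then have "r < dimv N (s a)" using NsC[of a] by auto
    then show "(R (s a) * smap E a) $$ (r, c) = (smap N a * R (t a)) $$ (r, c)" using dN0[of a] by simp
  qed
  have hom: "is_hom s t M E h"
    unfolding is_hom_def
  proof (intro conjI allI)
    fix v show "h v \<in> carrier_mat (dimv E v) (dimv M v)" by (rule hC)
  next
    fix a
    show "amap E a * h (s a) = h (t a) * amap M a"
      by (rule commute_gen[OF EaC[of a] MaC[of a] NaC[of a] gC[of "s a"] gC[of "t a"] fC[of "t a"]
          RC[of "s a"] RC[of "t a"] hC[of "s a"] hC[of "t a"] gha[symmetric] Ra Rh Rh gh gh Rf gker])
    show "smap E a * h (t a) = h (s a) * smap M a"
      by (rule commute_gen[OF EsC[of a] MsC[of a] NsC[of a] gC[of "t a"] gC[of "s a"] fC[of "s a"]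
          RC[of "t a"] RC[of "s a"] hC[of "t a"] hC[of "s a"] ghs[symmetric] Rs Rh Rh gh gh Rf gker])
  qed
  show "\<exists>h. is_hom s t M E h \<and> (\<forall>v. g v * h v = 1\<^sub>m (dimv M v))"
    using hom gh by blast
qed


end
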